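(* Let $f(z)=\sum_{k\ge0}a_kz^k$ have finite radius of convergence $0<R<\infty$, and let $n$ satisfy $a_n\neq 0$. Then \[ \lim_{r\to R}\kappa(n,r)=\frac{\|f\|_{H^1(D_R)}}{|a_n|R^n}, \] and this limit is finite if and only if $f$ belongs to the Hardy space $H^1(D_R)$. If $n>\nu$ then $\kappa(n,r)$ is strictly decreasing for $0<r<R$; whereas if $\nu=\infty$ then, for all $n$ with $a_n\ne0$, $\kappa(n,r)$ is strictly increasing for $r$ in some interval $(r_0,R)$.
   Context: For $0<r<R$: $M_1(r)=\frac{1}{2\pi}\int_0^{2\pi}|f(re^{i\theta})|\,d\theta$, $\kappa(n,r)=M_1(r)/(|a_n|r^n)$. The Hardy norm is $\|f\|_{H^1(D_R)}=\sup_{0<r<R}M_1(r)=\lim_{r\to R}M_1(r)\in(0,\infty]$; $f\in H^1(D_R)$ means this is finite. With $\sigma(r)=\log M_1(r)$ (which is differentiable with $\sigma'>0$ on $(0,R)$), $\nu=\sup_{0<r<R} r\sigma'(r)=\lim_{r\to R}r\sigma'(r)\in(0,\infty]$. *)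

theory Defs
  imports "HOL-Analysis.Analysis"
begin

definition pser :: "(nat \<Rightarrow> complex) \<Rightarrow> complex \<Rightarrow> complex" where
  "pser a z = (\<Sum>k. a k * z ^ k)"

definition M1 :: "(nat \<Rightarrow> complex) \<Rightarrow> real \<Rightarrow> real" where
  "M1 a r = integral {0..2*pi} (\<lambda>\<theta>. norm (pser a (complex_of_real r * cis \<theta>))) / (2*pi)"

definition kappa :: "(nat \<Rightarrow> complex) \<Rightarrow> nat \<Rightarrow> real \<Rightarrow> real" where
  "kappa a n r = M1 a r / (norm (a n) * r ^ n)"

definition hardy_norm :: "(nat \<Rightarrow> complex) \<Rightarrow> real \<Rightarrow> ereal" where
  "hardy_norm a R = (SUP r\<in>{0<..<R}. ereal (M1 a r))"

definition in_hardy_H1 :: "(nat \<Rightarrow> complex) \<Rightarrow> real \<Rightarrow> bool" where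
  "in_hardy_H1 a R \<longleftrightarrow> hardy_norm a R < \<infinity>"

definition sigma :: "(nat \<Rightarrow> complex) \<Rightarrow> real \<Rightarrow> real" where
  "sigma a r = ln (M1 a r)"

definition nu :: "(nat \<Rightarrow> complex) \<Rightarrow> real \<Rightarrow> ereal" where
  "nu a R = (SUP r\<in>{0<..<R}. ereal (r * deriv (sigma a) r))"

end

theory Submission
  imports Defs "HOL-Complex_Analysis.Complex_Analysis"
begin


lemma periodic_shift_integral:
  fixes g :: "real \<Rightarrow> real"
  assumes cont: "continuous_on UNIV g" and per: "\<And>t. g (t + 2*pi) = g t"
    and al: "0 \<le> \<alpha>" "\<alpha> \<le> 2*pi"
  shows "integral {0..2*pi} (\<lambda>t. g (t + \<alpha>)) = integral {0..2*pi} g"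
proof -
  have int: "\<And>x y. g integrable_on {x..y}"
    by (rule integrable_continuous_real) (rule continuous_on_subset[OF cont], auto)
  have "integral {0..2*pi} (\<lambda>t. g (t + \<alpha>)) = integral {\<alpha>..2*pi+\<alpha>} g"
  proof -
    have "integral {\<alpha>-\<alpha>..(2*pi+\<alpha>)-\<alpha>} (\<lambda>t. g (t + \<alpha>)) = integral {\<alpha>..2*pi+\<alpha>} g"
      by (rule integral_shift_real_ivl)
    then show ?thesis by simp
  qed
  also have "\<dots> = integral {\<alpha>..2*pi} g + integral {2*pi..2*pi+\<alpha>} g"
    by (rule Henstock_Kurzweil_Integration.integral_combine[symmetric]) (use al int in auto)
  also have "integral {2*pi..2*pi+\<alpha>} g = integral {0..\<alpha>} (\<lambda>t. g (t + 2*pi))"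
    using integral_shift_real_ivl[of "2*pi" "2*pi" "2*pi+\<alpha>" g] by simp
  also have "\<dots> = integral {0..\<alpha>} g" using per by simp
  also have "integral {\<alpha>..2*pi} g + integral {0..\<alpha>} g = integral {0..2*pi} g"
    by (subst add.commute, rule Henstock_Kurzweil_Integration.integral_combine) (use al int in auto)
  finally show ?thesis .
qed

locale hc =
  fixes a :: "nat \<Rightarrow> complex" and R :: real and n0 :: nat
  assumes conv: "conv_radius a = ereal R" and Rpos: "0 < R" and nz: "a n0 \<noteq> 0"
begin

abbreviation "f \<equiv> pser a"

lemma f_deriv: "norm z < R \<Longrightarrow> (f has_field_derivative pser (diffs a) z) (at z within A)"
  unfolding pser_def using has_field_derivative_powser[of z a A] conv by simp

lemma f_holo: "f holomorphic_on ball 0 R"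
  using f_deriv unfolding holomorphic_on_def field_differentiable_def by (meson mem_ball_0)

lemma f_cont: "continuous_on (ball 0 R) f"
  using f_holo holomorphic_on_imp_continuous_on by blast

lemma f_summable: "norm z < R \<Longrightarrow> summable (\<lambda>k. a k * z ^ k)"
  by (rule summable_in_conv_radius) (simp add: conv)

end

context hc begin

lemma series_integral:
  assumes z: "norm z < R" and psi: "continuous_on {0..2*pi} \<psi>"
  shows "((\<lambda>t. f (z * cis t) * \<psi> t) has_integral
           (\<Sum>k. a k * z^k * integral {0..2*pi} (\<lambda>t. cis t ^ k * \<psi> t))) {0..2*pi}"
proof -
  obtain B where B: "\<And>t. t \<in> {0..2*pi} \<Longrightarrow> norm (\<psi> t) \<le> B"
    using compact_imp_bounded[OF compact_continuous_image[OF psi compact_Icc]]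
    unfolding bounded_iff by (metis atLeastAtMost_iff image_eqI)
  define u where "u = (\<lambda>k t. a k * z^k * (cis t ^ k * \<psi> t))"
  have sumn: "summable (\<lambda>k. norm (a k * z ^ k))"
    by (rule abs_summable_in_conv_radius) (use z conv in simp)
  have ul: "uniform_limit {0..2*pi} (\<lambda>N t. \<Sum>k<N. u k t) (\<lambda>t. suminf (\<lambda>k. u k t)) sequentially"
  proof (rule Weierstrass_m_test)
    show "summable (\<lambda>k. norm (a k * z ^ k) * B)"
      using sumn by (rule summable_mult2)
    fix k t assume t: "t \<in> {0..2*pi}"
    show "norm (u k t) \<le> norm (a k * z ^ k) * B"
      unfolding u_def using B[OF t]
      by (simp add: norm_mult norm_power mult_left_mono)
  qed
  have lim: "suminf (\<lambda>k. u k t) = f (z * cis t) * \<psi> t" for t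
  proof -
    have "suminf (\<lambda>k. u k t) = (\<Sum>k. a k * (z * cis t) ^ k) * \<psi> t"
    proof -
      have "summable (\<lambda>k. a k * (z * cis t) ^ k)"
        by (rule f_summable) (simp add: z norm_mult)
      then have "(\<Sum>k. a k * (z * cis t) ^ k) * \<psi> t = (\<Sum>k. a k * (z * cis t) ^ k * \<psi> t)"
        by (rule suminf_mult2)
      then show ?thesis unfolding u_def by (simp add: power_mult_distrib mult.assoc)
    qed
    then show ?thesis by (simp add: pser_def)
  qed
  have contu: "continuous_on {0..2*pi} (\<lambda>t. \<Sum>k<N. u k t)" for N
    unfolding u_def by (intro continuous_intros psi)
  obtain I J where I: "\<And>N. ((\<lambda>t. \<Sum>k<N. u k t) has_integral I N) {0..2*pi}"
    and J: "((\<lambda>t. suminf (\<lambda>k. u k t)) has_integral J) {0..2*pi}"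
    and IJ: "I \<longlonglongrightarrow> J"
    using uniform_limit_integral[OF ul contu] by auto
  have cint: "(\<lambda>t. cis t ^ k * \<psi> t) integrable_on {0..2*pi}" for k
    by (intro integrable_continuous_real continuous_intros psi)
  have "I N = (\<Sum>k<N. a k * z^k * integral {0..2*pi} (\<lambda>t. cis t ^ k * \<psi> t))" for N
  proof -
    have "((\<lambda>t. \<Sum>k<N. u k t) has_integral
           (\<Sum>k<N. a k * z^k * integral {0..2*pi} (\<lambda>t. cis t ^ k * \<psi> t))) {0..2*pi}"
      unfolding u_def
      by (intro has_integral_sum finite_lessThan has_integral_mult_right integrable_integral cint)
    then show ?thesis using I has_integral_unique by blast
  qed
  then have "I = (\<lambda>N. \<Sum>k<N. a k * z^k * integral {0..2*pi} (\<lambda>t. cis t ^ k * \<psi> t))" by auto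
  with IJ have "(\<lambda>k. a k * z^k * integral {0..2*pi} (\<lambda>t. cis t ^ k * \<psi> t)) sums J"
    unfolding sums_def by simp
  then have "J = (\<Sum>k. a k * z^k * integral {0..2*pi} (\<lambda>t. cis t ^ k * \<psi> t))"
    by (simp add: sums_iff)
  with J lim show ?thesis by simp
qed

end

context hc begin

lemma f_circle_cont: "0 \<le> s \<Longrightarrow> s < R \<Longrightarrow> continuous_on UNIV (\<lambda>t. f (complex_of_real s * cis t))"
  by (rule continuous_on_compose2[OF f_cont]) (auto intro!: continuous_intros simp: norm_mult)

lemma M1_alt: "integral {0..2*pi} (\<lambda>t. norm (f (complex_of_real s * cis t))) = 2*pi * M1 a s"
  unfolding M1_def by simp

lemma M1_rot:
  assumes z: "norm z < R"
  shows "integral {0..2*pi} (\<lambda>t. norm (f (z * cis t))) = 2*pi * M1 a (norm z)"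
proof -
  define \<alpha> where "\<alpha> = (if Arg z \<ge> 0 then Arg z else Arg z + 2*pi)"
  have al: "0 \<le> \<alpha>" "\<alpha> \<le> 2*pi" using Arg_bounded[of z] unfolding \<alpha>_def by auto
  have "cis \<alpha> = cis (Arg z)" unfolding \<alpha>_def by (auto simp: cis.ctr)
  then have zz: "z = complex_of_real (norm z) * cis \<alpha>"
    using rcis_cmod_Arg[of z] by (simp add: rcis_def)
  define g where "g = (\<lambda>t. norm (f (complex_of_real (norm z) * cis t)))"
  have "continuous_on UNIV g" unfolding g_def
    by (intro continuous_intros f_circle_cont) (use z in auto)
  moreover have "g (t + 2*pi) = g t" for t
    unfolding g_def by (simp add: cis.ctr)
  ultimately have "integral {0..2*pi} (\<lambda>t. g (t + \<alpha>)) = integral {0..2*pi} g"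
    using periodic_shift_integral al by blast
  moreover have "(\<lambda>t. norm (f (z * cis t))) = (\<lambda>t. g (t + \<alpha>))"
    by (rule ext, subst zz) (simp add: g_def mult.assoc cis_mult add.commute)
  ultimately show ?thesis unfolding g_def M1_alt by simp
qed

end

context hc begin

lemma F_exists:
  assumes r: "0 < r" "r < R" and e: "0 < e"
  obtains F where "F holomorphic_on ball 0 R"
    "\<And>z. norm z < R \<Longrightarrow> norm (F z) \<le> M1 a (norm z)"
    "M1 a r - e \<le> norm (F (complex_of_real r))"
proof -
  define h where "h = (\<lambda>t. f (complex_of_real r * cis t))"
  define \<psi> where "\<psi> = (\<lambda>t. cnj (h t) / complex_of_real (max (norm (h t)) e))"
  have hc: "continuous_on UNIV h" unfolding h_def using f_circle_cont r by simp
  have den: "complex_of_real (max (norm (h t)) e) \<noteq> 0" for t using e by simp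
  have psic: "continuous_on {0..2*pi} \<psi>"
    unfolding \<psi>_def
    by (intro continuous_intros continuous_on_subset[OF hc] den) (use e in auto)
  have psib: "norm (\<psi> t) \<le> 1" for t
    using e unfolding \<psi>_def by (auto simp: norm_divide divide_le_eq_1 max_def)
  define c where "c = (\<lambda>k. integral {0..2*pi} (\<lambda>t. cis t ^ k * \<psi> t))"
  have cb: "norm (c k) \<le> 2*pi" for k
  proof -
    have "norm (c k) \<le> integral {0..2*pi} (\<lambda>t. 1::real)"
      unfolding c_def
      by (rule integral_norm_bound_integral)
         (auto intro!: integrable_continuous_real continuous_intros psic
               simp: norm_mult norm_power psib)
    then show ?thesis by simp
  qed
  define b where "b = (\<lambda>k. a k * c k / (2*pi))"
  have bb: "norm (b k) \<le> norm (a k)" for k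
  proof -
    have "norm (b k) = norm (a k) * (norm (c k) / (2*pi))"
      unfolding b_def by (simp add: norm_mult norm_divide)
    also have "\<dots> \<le> norm (a k) * 1"
      using cb[of k] by (intro mult_left_mono) auto
    finally show ?thesis by simp
  qed
  have convb: "conv_radius b \<ge> R"
  proof (rule conv_radius_geI_ex')
    fix s :: real assume s: "0 < s" "ereal s < ereal R"
    have "summable (\<lambda>k. norm (a k * complex_of_real s ^ k))"
      by (rule abs_summable_in_conv_radius) (use s conv in simp)
    then show "summable (\<lambda>k. b k * complex_of_real s ^ k)"
      by (rule summable_norm_cancel[OF summable_comparison_test[rotated]])
         (auto simp: norm_mult intro!: mult_right_mono bb)
  qed
  define F where "F = pser b"
  have holo: "F holomorphic_on ball 0 R"
  proof -
    have "(F has_field_derivative pser (diffs b) z) (at z)" if "z \<in> ball 0 R" for z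
      unfolding F_def pser_def
      by (rule has_field_derivative_powser) (use that convb in \<open>auto intro: less_le_trans[of _ "ereal R"]\<close>)
    then show ?thesis
      unfolding holomorphic_on_def field_differentiable_def
      using has_field_derivative_at_within by blast
  qed
  have repr: "F z = integral {0..2*pi} (\<lambda>t. f (z * cis t) * \<psi> t) / (2*pi)" if z: "norm z < R" for z
  proof -
    have I: "integral {0..2*pi} (\<lambda>t. f (z * cis t) * \<psi> t) = (\<Sum>k. a k * z^k * c k)"
      using series_integral[OF z psic] unfolding c_def by (rule integral_unique)
    have sa: "summable (\<lambda>k. norm (a k * z ^ k))"
      by (rule abs_summable_in_conv_radius) (use z conv in simp)
    have "summable (\<lambda>k. a k * z^k * c k)"
    proof (rule summable_norm_cancel[OF summable_comparison_test[rotated]])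
      show "summable (\<lambda>k. norm (a k * z ^ k) * (2*pi))" using sa by (rule summable_mult2)
      show "\<exists>N. \<forall>k\<ge>N. norm (norm (a k * z ^ k * c k)) \<le> norm (a k * z ^ k) * (2 * pi)"
        using cb by (auto simp: norm_mult intro!: mult_left_mono)
    qed
    then have "(\<Sum>k. a k * z^k * c k) / (2*pi) = (\<Sum>k. a k * z^k * c k / (2*pi))"
      by (rule suminf_divide[symmetric])
    also have "\<dots> = F z" unfolding F_def pser_def b_def by (simp add: algebra_simps)
    finally show ?thesis using I by simp
  qed
  have bound: "norm (F z) \<le> M1 a (norm z)" if z: "norm z < R" for z
  proof -
    have fc: "continuous_on UNIV (\<lambda>t. f (z * cis t))"
      by (rule continuous_on_compose2[OF f_cont]) (auto intro!: continuous_intros simp: norm_mult z)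
    have "norm (integral {0..2*pi} (\<lambda>t. f (z * cis t) * \<psi> t))
          \<le> integral {0..2*pi} (\<lambda>t. norm (f (z * cis t)))"
      by (rule integral_norm_bound_integral)
         (auto intro!: integrable_continuous_real continuous_intros psic continuous_on_subset[OF fc]
               simp: norm_mult mult_left_le psib)
    also have "\<dots> = 2*pi * M1 a (norm z)" by (rule M1_rot[OF z])
    finally show ?thesis using repr[OF z] by (simp add: norm_divide divide_le_eq mult.commute)
  qed
  define q where "q = (\<lambda>t. (norm (h t))^2 / max (norm (h t)) e)"
  have hq: "h t * \<psi> t = complex_of_real (q t)" for t
    unfolding \<psi>_def q_def using complex_norm_square[of "h t"] by (simp add: field_simps)
  have qc: "continuous_on {0..2*pi} q"
    unfolding q_def
    by (intro continuous_intros continuous_on_subset[OF hc]) (use e in auto)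
  have Fr: "F (complex_of_real r) = complex_of_real (integral {0..2*pi} q / (2*pi))"
  proof -
    have "(q has_integral integral {0..2*pi} q) {0..2*pi}"
      using qc integrable_continuous_real by blast
    then have "((\<lambda>t. complex_of_real (q t)) has_integral complex_of_real (integral {0..2*pi} q)) {0..2*pi}"
      by (rule has_integral_of_real)
    then have "integral {0..2*pi} (\<lambda>t. f (complex_of_real r * cis t) * \<psi> t) = complex_of_real (integral {0..2*pi} q)"
      using hq unfolding h_def by (simp add: integral_unique)
    then show ?thesis using repr[of "complex_of_real r"] r by simp
  qed
  have "integral {0..2*pi} (\<lambda>t. norm (h t) - e) \<le> integral {0..2*pi} q"
  proof (rule integral_le)
    show "(\<lambda>t. norm (h t) - e) integrable_on {0..2*pi}"
      by (intro integrable_continuous_real continuous_intros continuous_on_subset[OF hc]) auto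
    show "q integrable_on {0..2*pi}" using qc integrable_continuous_real by blast
    fix t
    show "norm (h t) - e \<le> q t"
    proof (cases "norm (h t) \<le> e")
      case True
      have "0 \<le> q t" unfolding q_def using e by (intro divide_nonneg_nonneg) auto
      then show ?thesis using True by simp
    next
      case False
      then show ?thesis unfolding q_def using e by (simp add: power2_eq_square)
    qed
  qed
  moreover have "integral {0..2*pi} (\<lambda>t. norm (h t) - e) = 2*pi * M1 a r - 2*pi*e"
  proof -
    have "integral {0..2*pi} (\<lambda>t. norm (h t) - e) = integral {0..2*pi} (\<lambda>t. norm (h t)) - integral {0..2*pi} (\<lambda>t. e)"
      by (rule integral_diff) (auto intro!: integrable_continuous_real continuous_intros continuous_on_subset[OF hc])
    then show ?thesis unfolding h_def M1_alt by simp
  qed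
  ultimately have "M1 a r - e \<le> integral {0..2*pi} q / (2*pi)"
    by (simp add: field_simps)
  also have "\<dots> \<le> norm (F (complex_of_real r))" unfolding Fr norm_of_real by (rule abs_ge_self)
  finally show ?thesis using that holo bound by blast
qed

end

context hc begin

lemma M1_nonneg: "0 \<le> M1 a r"
proof (cases "(\<lambda>\<theta>. norm (f (complex_of_real r * cis \<theta>))) integrable_on {0..2*pi}")
  case True
  then show ?thesis unfolding M1_def by (intro divide_nonneg_pos integral_nonneg) auto
next
  case False
  then show ?thesis unfolding M1_def by (simp add: not_integrable_integral)
qed

lemma M1_mono:
  assumes rs: "0 < r" "r < s" "s < R"
  shows "M1 a r \<le> M1 a s"
proof (rule field_le_epsilon)
  fix e :: real assume e: "0 < e"
  obtain F where holo: "F holomorphic_on ball 0 R"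
    and bd: "\<And>z. norm z < R \<Longrightarrow> norm (F z) \<le> M1 a (norm z)"
    and lo: "M1 a r - e \<le> norm (F (complex_of_real r))"
    using F_exists[of r e] rs e by auto
  have "norm (F (complex_of_real r)) \<le> M1 a s"
  proof (rule maximum_modulus_frontier[of F "ball 0 s" "M1 a s" "complex_of_real r"])
    show "F holomorphic_on interior (ball 0 s)"
      using holo by (rule holomorphic_on_subset) (use rs in auto)
    show "continuous_on (closure (ball 0 s)) F"
      using holomorphic_on_imp_continuous_on[OF holo]
      by (rule continuous_on_subset) (use rs in auto)
    show "bounded (ball (0::complex) s)" by simp
    show "norm (F z) \<le> M1 a s" if "z \<in> frontier (ball 0 s)" for z
      using that bd[of z] rs by auto
    show "complex_of_real r \<in> ball 0 s" using rs by simp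
  qed
  then show "M1 a r \<le> M1 a s + e" using lo by simp
qed

lemma M1_three_circles:
  assumes rs: "0 < r1" "r1 < r" "r < r2" "r2 < R" and q: "0 < q"
  shows "r powi p * M1 a r ^ q \<le> max (r1 powi p * M1 a r1 ^ q) (r2 powi p * M1 a r2 ^ q)"
    (is "_ \<le> ?B")
proof -
  have B0: "0 \<le> ?B" using rs M1_nonneg by (auto intro: max.coboundedI1)
  define S where "S = {z::complex. r1 < norm z \<and> norm z < r2}"
  define K where "K = {z::complex. r1 \<le> norm z \<and> norm z \<le> r2}"
  have openS: "open S" unfolding S_def
    by (intro open_Collect_conj open_Collect_less continuous_intros)
  have closedK: "closed K" unfolding K_def
    by (intro closed_Collect_conj closed_Collect_le continuous_intros)
  have SK: "S \<subseteq> K" unfolding S_def K_def by auto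
  have clS: "closure S \<subseteq> K" using closure_minimal[OF SK closedK] .
  have frS: "frontier S \<subseteq> {z. norm z = r1 \<or> norm z = r2}"
    using clS unfolding frontier_def interior_open[OF openS] unfolding S_def K_def by force
  have KR: "K \<subseteq> ball 0 R" "0 \<notin> K" unfolding K_def using rs by auto
  have key: "r powi p * (M1 a r - e) ^ q \<le> ?B" if e: "0 < e" "e < M1 a r" for e
  proof -
    obtain F where holo: "F holomorphic_on ball 0 R"
      and bd: "\<And>z. norm z < R \<Longrightarrow> norm (F z) \<le> M1 a (norm z)"
      and lo: "M1 a r - e \<le> norm (F (complex_of_real r))"
      using F_exists[of r e] rs e by auto
    define G where "G = (\<lambda>z. z powi p * F z ^ q)"
    have holoK: "G holomorphic_on K" unfolding G_def
      by (intro holomorphic_intros holomorphic_on_subset[OF holo KR(1)]) (use KR in auto)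
    have "norm (G (complex_of_real r)) \<le> ?B"
    proof (rule maximum_modulus_frontier[of G S ?B "complex_of_real r"])
      show "G holomorphic_on interior S"
        using holoK by (rule holomorphic_on_subset) (use SK interior_subset in blast)
      show "continuous_on (closure S) G"
        using holomorphic_on_imp_continuous_on[OF holoK] by (rule continuous_on_subset) (rule clS)
      show "bounded S" unfolding S_def bounded_iff by (intro exI[of _ r2]) auto
      show "complex_of_real r \<in> S" unfolding S_def using rs by simp
      fix z assume "z \<in> frontier S"
      then have z: "norm z = r1 \<or> norm z = r2" using frS by auto
      have nG: "norm (G z) = norm z powi p * norm (F z) ^ q"
        unfolding G_def by (simp add: norm_mult norm_power_int norm_power)
      show "norm (G z) \<le> ?B"
      proof (cases "norm z = r1")
        case True
        have "norm (F z) ^ q \<le> M1 a r1 ^ q"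
          using bd[of z] True rs by (intro power_mono) auto
        then have "norm (G z) \<le> r1 powi p * M1 a r1 ^ q"
          unfolding nG True using rs by (intro mult_left_mono) auto
        then show ?thesis by linarith
      next
        case False
        then have F: "norm z = r2" using z by auto
        have "norm (F z) ^ q \<le> M1 a r2 ^ q"
          using bd[of z] F rs by (intro power_mono) auto
        then have "norm (G z) \<le> r2 powi p * M1 a r2 ^ q"
          unfolding nG F using rs by (intro mult_left_mono) auto
        then show ?thesis by linarith
      qed
    qed
    moreover have "r powi p * (M1 a r - e) ^ q \<le> norm (G (complex_of_real r))"
    proof -
      have "(M1 a r - e) ^ q \<le> norm (F (complex_of_real r)) ^ q"
        using lo e by (intro power_mono) auto
      then show ?thesis unfolding G_def using rs
        by (simp add: norm_mult norm_power_int norm_power abs_of_pos mult_left_mono)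
    qed
    ultimately show ?thesis by linarith
  qed
  show ?thesis
  proof (cases "M1 a r = 0")
    case True
    then show ?thesis using B0 q by (simp add: power_0_left)
  next
    case False
    then have Mpos: "0 < M1 a r" using M1_nonneg[of r] by simp
    have lim: "((\<lambda>e. r powi p * (M1 a r - e) ^ q) \<longlongrightarrow> r powi p * (M1 a r - 0) ^ q) (at_right 0)"
      by (intro tendsto_intros)
    have ev: "eventually (\<lambda>e. r powi p * (M1 a r - e) ^ q \<le> ?B) (at_right 0)"
    proof -
      have "eventually (\<lambda>e. 0 < e \<and> e < M1 a r) (at_right (0::real))"
        using eventually_at_right_real[OF Mpos] by (simp add: eventually_at_right_field)
      then show ?thesis by eventually_elim (use key in auto)
    qed
    have "r powi p * (M1 a r - 0) ^ q \<le> ?B"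
      by (rule tendsto_le[OF _ tendsto_const lim ev]) simp
    then show ?thesis by simp
  qed
qed

end

context hc begin

lemma f_not_zero: "\<not> (\<forall>z\<in>ball 0 R. f z = 0)"
proof
  assume Z: "\<forall>z\<in>ball 0 R. f z = 0"
  have rad: "fps_conv_radius (Abs_fps a) > 0" "fps_conv_radius (0 :: complex fps) > 0"
    using conv Rpos by (auto simp: fps_conv_radius_def)
  have "eventually (\<lambda>z. z \<in> ball (0::complex) R) (nhds 0)"
    using Rpos by (intro eventually_nhds_in_open) auto
  then have "eventually (\<lambda>z. eval_fps (Abs_fps a) z = eval_fps 0 z) (nhds 0)"
    by eventually_elim (use Z in \<open>auto simp: eval_fps_def pser_def\<close>)
  then have "Abs_fps a = 0" using eval_fps_eqD[OF rad] by blast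
  then have "a n0 = 0" by (metis fps_nth_Abs_fps fps_zero_nth)
  then show False using nz by simp
qed

lemma zeros_sphere_finite:
  assumes r: "0 \<le> r" "r < R"
  shows "finite {z. norm z = r \<and> f z = 0}"
proof (rule ccontr)
  define T where "T = {z. norm z = r \<and> f z = 0}"
  assume inf: "infinite {z. norm z = r \<and> f z = 0}"
  have bT: "bounded T" unfolding T_def bounded_iff by auto
  obtain \<xi> where xi: "\<xi> islimpt T"
    using bounded_infinite_imp_islimpt[of T T] bT inf unfolding T_def by auto
  have "closed {z::complex. norm z = r}"
    by (intro closed_Collect_eq continuous_intros)
  then have "\<xi> \<in> {z::complex. norm z = r}"
    using xi islimpt_subset[of \<xi> T "{z. norm z = r}"] closed_limpt unfolding T_def by blast
  then have xiR: "\<xi> \<in> ball 0 R" using r by simp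
  have "\<forall>w\<in>ball 0 R. f w = 0"
  proof
    fix w assume w: "w \<in> ball (0::complex) R"
    show "f w = 0"
      by (rule analytic_continuation[OF f_holo open_ball connected_ball _ xiR xi _ w])
         (use r in \<open>auto simp: T_def\<close>)
  qed
  then show False using f_not_zero by blast
qed

lemma zeros_circle_finite:
  assumes r: "0 < r" "r < R"
  shows "finite {t\<in>{0..2*pi}. f (complex_of_real r * cis t) = 0}"
proof -
  define Z where "Z = {z. norm z = r \<and> f z = 0}"
  have fZ: "finite Z" unfolding Z_def using zeros_sphere_finite r by simp
  define g1 where "g1 = (\<lambda>z. Arg (z / complex_of_real r))"
  define g2 where "g2 = (\<lambda>z. Arg (z / complex_of_real r) + 2*pi)"
  have "{t\<in>{0..2*pi}. f (complex_of_real r * cis t) = 0} \<subseteq> g1 ` Z \<union> g2 ` Z"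
  proof
    fix t assume t: "t \<in> {t\<in>{0..2*pi}. f (complex_of_real r * cis t) = 0}"
    have zZ: "complex_of_real r * cis t \<in> Z" using t r unfolding Z_def by (simp add: norm_mult)
    have q: "complex_of_real r * cis t / complex_of_real r = cis t" using r by simp
    show "t \<in> g1 ` Z \<union> g2 ` Z"
    proof (cases "t \<le> pi")
      case True
      have "g1 (complex_of_real r * cis t) = t" unfolding g1_def q
        using True t pi_gt_zero by (intro Arg_cis) (auto simp: less_le_trans[of "-pi" 0 t])
      then show ?thesis using zZ by (metis UnI1 image_eqI)
    next
      case False
      have "cis t = cis (t - 2*pi)" by (simp add: cis.ctr cos_diff sin_diff)
      then have "Arg (cis t) = t - 2*pi"
      proof -
        have "t - 2*pi \<in> {-pi<..pi}" using False t by auto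
        from Arg_cis[OF this] show ?thesis using \<open>cis t = cis (t - 2*pi)\<close> by simp
      qed
      then have "g2 (complex_of_real r * cis t) = t" unfolding g2_def q by simp
      then show ?thesis using zZ by (metis UnI2 image_eqI)
    qed
  qed
  moreover have "finite (g1 ` Z \<union> g2 ` Z)" using fZ by simp
  ultimately show ?thesis by (rule finite_subset)
qed

lemma M1_pos:
  assumes r: "0 < r" "r < R"
  shows "0 < M1 a r"
proof -
  define B where "B = {t\<in>{0..2*pi}. f (complex_of_real r * cis t) = 0}"
  have fB: "finite B" unfolding B_def using zeros_circle_finite[OF r] .
  obtain t where t: "t \<in> {0..2*pi}" "t \<notin> B"
  proof -
    have "infinite {0..2*pi::real}" using pi_gt_zero by (simp add: infinite_Icc)
    then have "{0..2*pi} - B \<noteq> {}" using fB by (metis finite_subset Diff_eq_empty_iff)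
    then show ?thesis using that by blast
  qed
  define h where "h = (\<lambda>t. norm (f (complex_of_real r * cis t)))"
  have hc: "continuous_on UNIV h" unfolding h_def
    by (intro continuous_intros f_circle_cont) (use r in auto)
  have ht: "0 < h t" using t unfolding h_def B_def by auto
  have "0 < integral {0..2*pi} h"
  proof (rule ccontr)
    assume "\<not> 0 < integral {0..2*pi} h"
    then have "integral {0..2*pi} h = 0"
      using integral_nonneg[of h "{0..2*pi}"] integrable_continuous_real[OF continuous_on_subset[OF hc]]
      unfolding h_def by fastforce
    then have "\<forall>x\<in>{0..2*pi}. h x = 0"
      using integral_eq_0_iff[of 0 "2*pi" h] continuous_on_subset[OF hc] unfolding h_def by auto
    then show False using ht t by auto
  qed
  then show ?thesis unfolding M1_def h_def by simp
qed

end

context hc begin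

lemma f_lipschitz:
  assumes "0 \<le> \<rho>" "\<rho> < R"
  obtains L where "0 \<le> L" "\<And>x y. x \<in> cball 0 \<rho> \<Longrightarrow> y \<in> cball 0 \<rho> \<Longrightarrow> norm (f x - f y) \<le> L * norm (x - y)"
proof -
  have dh: "deriv f holomorphic_on ball 0 R" using holomorphic_deriv[OF f_holo open_ball] .
  have sub: "cball 0 \<rho> \<subseteq> ball (0::complex) R" using assms by auto
  have "continuous_on (cball 0 \<rho>) (deriv f)"
    using holomorphic_on_imp_continuous_on[OF dh] sub by (rule continuous_on_subset)
  then have "bounded (deriv f ` cball 0 \<rho>)"
    by (intro compact_imp_bounded compact_continuous_image compact_cball)
  then obtain L0 where L0: "\<And>z. z \<in> cball 0 \<rho> \<Longrightarrow> norm (deriv f z) \<le> L0"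
    unfolding bounded_iff by (metis image_eqI)
  define L where "L = max L0 0"
  show ?thesis
  proof (rule that)
    show "0 \<le> L" unfolding L_def by simp
    fix x y :: complex assume xy: "x \<in> cball 0 \<rho>" "y \<in> cball 0 \<rho>"
    show "norm (f x - f y) \<le> L * norm (x - y)"
    proof (rule field_differentiable_bound[OF convex_cball _ _ xy])
      fix z :: complex assume z: "z \<in> cball 0 \<rho>"
      then have "norm z < R" using sub by auto
      then have "(f has_field_derivative pser (diffs a) z) (at z)" by (rule f_deriv)
      then have "deriv f z = pser (diffs a) z" by (rule DERIV_imp_deriv)
      then show "(f has_field_derivative deriv f z) (at z within cball 0 \<rho>)"
        using f_deriv \<open>norm z < R\<close> by simp
      show "norm (deriv f z) \<le> L" using L0[OF z] unfolding L_def by simp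
    qed
  qed
qed

lemma M1_has_deriv:
  assumes r: "0 < r" "r < R"
  shows "\<exists>D. (M1 a has_real_derivative D) (at r)"
proof -
  define \<rho> where "\<rho> = (r + R) / 2"
  have rho: "r < \<rho>" "\<rho> < R" unfolding \<rho>_def using r by auto
  define \<delta> where "\<delta> = min r (\<rho> - r)"
  have dpos: "0 < \<delta>" unfolding \<delta>_def using r rho by auto
  obtain L where L0: "0 \<le> L"
    and L: "\<And>x y. x \<in> cball 0 \<rho> \<Longrightarrow> y \<in> cball 0 \<rho> \<Longrightarrow> norm (f x - f y) \<le> L * norm (x - y)"
    using f_lipschitz[of \<rho>] rho r by auto
  define h where "h = (\<lambda>s t. norm (f (complex_of_real s * cis t)))"
  have hc: "continuous_on UNIV (h s)" if "0 \<le> s" "s < R" for s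
    unfolding h_def by (intro continuous_intros f_circle_cont that)
  have hint: "(h s has_integral 2*pi * M1 a s) {0..2*pi}" if "0 \<le> s" "s < R" for s
    using integrable_continuous_real[OF continuous_on_subset[OF hc[OF that]]] M1_alt[of s]
    unfolding h_def by (metis has_integral_integral subset_UNIV)
  define B where "B = {t\<in>{0..2*pi}. f (complex_of_real r * cis t) = 0}"
  have fB: "finite B" unfolding B_def using zeros_circle_finite[OF r] .
  have hlip: "\<bar>h s t - h r t\<bar> \<le> L * \<bar>s - r\<bar>" if s: "0 \<le> s" "s \<le> \<rho>" for s t
  proof -
    have "\<bar>h s t - h r t\<bar> \<le> norm (f (complex_of_real s * cis t) - f (complex_of_real r * cis t))"
      unfolding h_def by (rule norm_triangle_ineq3)
    also have "\<dots> \<le> L * norm (complex_of_real s * cis t - complex_of_real r * cis t)"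
      by (rule L) (use s rho r in \<open>auto simp: norm_mult\<close>)
    also have "norm (complex_of_real s * cis t - complex_of_real r * cis t) = \<bar>s - r\<bar>"
      by (simp add: left_diff_distrib[symmetric] norm_mult flip: of_real_diff)
    finally show ?thesis .
  qed
  define D where "D = (\<lambda>t. deriv (\<lambda>s. h s t) r)"
  have hder: "((\<lambda>s. h s t) has_real_derivative D t) (at r)" if t: "t \<in> {0..2*pi}" "t \<notin> B" for t
  proof -
    have nz: "f (complex_of_real r * cis t) \<noteq> 0" using t unfolding B_def by auto
    have g: "((\<lambda>s. f (complex_of_real s * cis t)) has_vector_derivative (cis t * pser (diffs a) (complex_of_real r * cis t))) (at r)"
    proof -
      have 1: "((\<lambda>s. complex_of_real s * cis t) has_vector_derivative cis t) (at r)"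
        by (auto intro!: derivative_eq_intros)
      have 2: "(f has_field_derivative pser (diffs a) (complex_of_real r * cis t)) (at (complex_of_real r * cis t))"
        by (rule f_deriv) (use r in \<open>simp add: norm_mult\<close>)
      show ?thesis using field_vector_diff_chain_at[OF 1 2] by (simp add: o_def)
    qed
    have "(norm \<circ> (\<lambda>s. f (complex_of_real s * cis t))) differentiable (at r)"
      by (rule differentiable_chain_at[OF differentiableI_vector[OF g]]) (use nz in simp)
    then have "(\<lambda>s. h s t) differentiable (at r)" unfolding h_def o_def .
    then show ?thesis unfolding D_def by (simp add: DERIV_deriv_iff_real_differentiable)
  qed
  define G where "G = (\<lambda>t. if t \<in> B then 0 else D t)"
  have lim: "((\<lambda>y. (M1 a y - M1 a r) / (y - r)) \<longlongrightarrow> integral {0..2*pi} G / (2*pi)) (at r within ball r \<delta>)"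
    unfolding tendsto_at_iff_sequentially
  proof (intro allI impI)
    fix X :: "nat \<Rightarrow> real"
    assume X: "\<forall>i. X i \<in> ball r \<delta> - {r}" and Xr: "X \<longlonglongrightarrow> r"
    have Xb: "0 \<le> X i" "X i \<le> \<rho>" "X i < R" "X i \<noteq> r" for i
      using X[rule_format, of i] dpos rho unfolding \<delta>_def by (auto simp: dist_real_def)
    define Q where "Q = (\<lambda>i t. if t \<in> B then 0 else (h (X i) t - h r t) / (X i - r))"
    have Qint: "(Q i has_integral (2*pi * M1 a (X i) - 2*pi * M1 a r) / (X i - r)) {0..2*pi}" for i
    proof -
      have "((\<lambda>t. (h (X i) t - h r t) / (X i - r)) has_integral (2*pi * M1 a (X i) - 2*pi * M1 a r) / (X i - r)) {0..2*pi}"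
        by (intro has_integral_divide has_integral_diff hint) (use Xb r in auto)
      then show ?thesis
        by (rule has_integral_spike_finite[OF fB, rotated]) (auto simp: Q_def)
    qed
    have dc: "G integrable_on {0..2*pi}" "(\<lambda>i. integral {0..2*pi} (Q i)) \<longlonglongrightarrow> integral {0..2*pi} G"
    proof -
      have A: "\<And>i. Q i integrable_on {0..2*pi}" using Qint by blast
      have B': "(\<lambda>t. L) integrable_on {0..2*pi}" by (intro integrable_continuous_real continuous_intros)
      have C: "norm (Q i t) \<le> L" if "t \<in> {0..2*pi}" for i t
      proof (cases "t \<in> B")
        case True then show ?thesis using L0 by (simp add: Q_def)
      next
        case False
        have "\<bar>h (X i) t - h r t\<bar> \<le> L * \<bar>X i - r\<bar>" by (rule hlip) (use Xb in auto)
        then show ?thesis using False Xb(4)[of i]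
          by (simp add: Q_def abs_divide divide_le_eq)
      qed
      have E: "(\<lambda>i. Q i t) \<longlonglongrightarrow> G t" if t: "t \<in> {0..2*pi}" for t
      proof (cases "t \<in> B")
        case True then show ?thesis by (simp add: Q_def G_def)
      next
        case False
        have "((\<lambda>y. (h y t - h r t) / (y - r)) \<longlongrightarrow> D t) (at r)"
          using hder[OF t False] unfolding has_field_derivative_iff .
        then have "((\<lambda>y. (h y t - h r t) / (y - r)) \<circ> X) \<longlonglongrightarrow> D t"
          unfolding tendsto_at_iff_sequentially using Xb(4) Xr by auto
        then show ?thesis using False by (simp add: Q_def G_def o_def)
      qed
      show "G integrable_on {0..2*pi}" "(\<lambda>i. integral {0..2*pi} (Q i)) \<longlonglongrightarrow> integral {0..2*pi} G"
        using dominated_convergence[OF A B' C E] by auto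
    qed
    have "(\<lambda>i. integral {0..2*pi} (Q i) / (2*pi)) \<longlonglongrightarrow> integral {0..2*pi} G / (2*pi)"
      using dc(2) by (intro tendsto_divide tendsto_const) auto
    moreover have "integral {0..2*pi} (Q i) / (2*pi) = (M1 a (X i) - M1 a r) / (X i - r)" for i
    proof -
      have "X i - r \<noteq> 0" using Xb(4)[of i] by simp
      then show ?thesis using integral_unique[OF Qint[of i]] by (simp add: field_simps)
    qed
    ultimately show "((\<lambda>y. (M1 a y - M1 a r) / (y - r)) \<circ> X) \<longlonglongrightarrow> integral {0..2*pi} G / (2*pi)"
      by (simp add: o_def)
  qed
  then have "(M1 a has_real_derivative integral {0..2*pi} G / (2*pi)) (at r within ball r \<delta>)"
    unfolding has_field_derivative_iff .
  then have "(M1 a has_real_derivative integral {0..2*pi} G / (2*pi)) (at r)"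
    using at_within_open[of r "ball r \<delta>"] dpos by simp
  then show ?thesis by blast
qed

end

context hc begin

lemma sigma_deriv:
  assumes r: "0 < r" "r < R"
  shows "(sigma a has_real_derivative deriv (sigma a) r) (at r)"
    and "(M1 a has_real_derivative M1 a r * deriv (sigma a) r) (at r)"
proof -
  obtain D where D: "(M1 a has_real_derivative D) (at r)" using M1_has_deriv[OF r] by blast
  have pos: "0 < M1 a r" using M1_pos[OF r] .
  have sd: "(sigma a has_real_derivative D / M1 a r) (at r)"
  proof -
    have "((\<lambda>x. ln (M1 a x)) has_real_derivative (1 / M1 a r) * D) (at r)"
      using DERIV_chain2[OF DERIV_ln_divide[OF pos] D] .
    then show ?thesis unfolding sigma_def[abs_def] by simp
  qed
  then have eq: "deriv (sigma a) r = D / M1 a r" by (rule DERIV_imp_deriv)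
  show "(sigma a has_real_derivative deriv (sigma a) r) (at r)" using sd eq by simp
  show "(M1 a has_real_derivative M1 a r * deriv (sigma a) r) (at r)" using D eq pos by simp
qed

lemma psi_mono:
  assumes r: "0 < r1" "r1 < r2" "r2 < R"
  shows "r1 * deriv (sigma a) r1 \<le> r2 * deriv (sigma a) r2"
proof (rule ccontr)
  define \<psi> where "\<psi> = (\<lambda>x. x * deriv (sigma a) x)"
  assume "\<not> ?thesis"
  then have lt: "- \<psi> r1 < - \<psi> r2" unfolding \<psi>_def by simp
  obtain \<beta> where \<beta>: "\<beta> \<in> \<rat>" "- \<psi> r1 < \<beta>" "\<beta> < - \<psi> r2"
    using Rats_dense_in_real[OF lt] by blast
  obtain p :: int and q0 :: int where q0: "q0 > 0" and pq: "\<beta> = of_int p / of_int q0"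
    using Rats_cases'[OF \<beta>(1)] by metis
  define q where "q = nat q0"
  have q: "0 < q" "real q = of_int q0" unfolding q_def using q0 by auto
  have b1: "0 < q * \<psi> r1 + p" and b2: "q * \<psi> r2 + p < 0"
    using \<beta>(2,3) q0 unfolding pq q(2) by (auto simp: field_simps)
  define \<Phi> where "\<Phi> = (\<lambda>x. real q * sigma a x + real_of_int p * ln x)"
  have Phid: "(\<Phi> has_real_derivative (q * \<psi> x + p) / x) (at x)" if x: "0 < x" "x < R" for x
  proof -
    have "(\<Phi> has_real_derivative real q * deriv (sigma a) x + real_of_int p * (1/x)) (at x)"
      unfolding \<Phi>_def
      by (intro DERIV_add DERIV_cmult sigma_deriv(1)[OF x] DERIV_ln_divide x)
    then show ?thesis using x unfolding \<psi>_def by (simp add: field_simps)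
  qed
  have Phiexp: "\<Phi> x = ln (x powi p * M1 a x ^ q)" if x: "0 < x" "x < R" for x
  proof -
    have "x powi p = x powr (real_of_int p)" using x by (simp add: powr_real_of_int')
    then show ?thesis using x M1_pos[OF x]
      by (simp add: \<Phi>_def ln_mult ln_realpow ln_powr sigma_def)
  qed
  have contPhi: "continuous_on {r1..r2} \<Phi>"
  proof (intro DERIV_atLeastAtMost_imp_continuous_on)
    fix x assume "r1 \<le> x" "x \<le> r2"
    then show "\<exists>y. (\<Phi> has_real_derivative y) (at x)" using Phid[of x] r by auto
  qed
  obtain m where m: "m \<in> {r1..r2}" and mx: "\<And>y. y \<in> {r1..r2} \<Longrightarrow> \<Phi> y \<le> \<Phi> m"
    using continuous_attains_sup[OF compact_Icc _ contPhi] r by auto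
  have d1: "0 < (q * \<psi> r1 + p) / r1" using b1 r by simp
  obtain d where d: "d > 0" "\<And>h. h > 0 \<Longrightarrow> h < d \<Longrightarrow> \<Phi> r1 < \<Phi> (r1 + h)"
    using DERIV_pos_inc_right[OF Phid[of r1] d1] r by auto
  have "\<Phi> r1 < \<Phi> m"
  proof -
    define h where "h = min (d/2) (r2 - r1)"
    have "\<Phi> r1 < \<Phi> (r1 + h)" using d r unfolding h_def by (intro d(2)) auto
    also have "\<dots> \<le> \<Phi> m" using r d unfolding h_def by (intro mx) auto
    finally show ?thesis .
  qed
  have d2: "(q * \<psi> r2 + p) / r2 < 0" using b2 r by (simp add: divide_neg_pos)
  obtain d' where d': "d' > 0" "\<And>h. h > 0 \<Longrightarrow> h < d' \<Longrightarrow> \<Phi> r2 < \<Phi> (r2 - h)"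
    using DERIV_neg_dec_left[OF Phid[of r2] d2] r by auto
  have "\<Phi> r2 < \<Phi> m"
  proof -
    define h where "h = min (d'/2) (r2 - r1)"
    have "\<Phi> r2 < \<Phi> (r2 - h)" using d' r unfolding h_def by (intro d'(2)) auto
    also have "\<dots> \<le> \<Phi> m" using r d' unfolding h_def by (intro mx) auto
    finally show ?thesis .
  qed
  have mm: "r1 < m" "m < r2" using \<open>\<Phi> r1 < \<Phi> m\<close> \<open>\<Phi> r2 < \<Phi> m\<close> m by (auto simp: less_le)
  have tc: "m powi p * M1 a m ^ q \<le> max (r1 powi p * M1 a r1 ^ q) (r2 powi p * M1 a r2 ^ q)"
    using M1_three_circles[OF r(1) mm r(3) q(1)] .
  have pos: "0 < x powi p * M1 a x ^ q" if "0 < x" "x < R" for x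
    using that M1_pos[OF that] by simp
  have "\<Phi> m \<le> max (\<Phi> r1) (\<Phi> r2)"
  proof (cases "r1 powi p * M1 a r1 ^ q \<le> r2 powi p * M1 a r2 ^ q")
    case True
    then have "m powi p * M1 a m ^ q \<le> r2 powi p * M1 a r2 ^ q" using tc by simp
    then have "\<Phi> m \<le> \<Phi> r2" using pos[of m] pos[of r2] mm r
      by (simp add: Phiexp)
    then show ?thesis by simp
  next
    case False
    then have "m powi p * M1 a m ^ q \<le> r1 powi p * M1 a r1 ^ q" using tc by simp
    then have "\<Phi> m \<le> \<Phi> r1" using pos[of m] pos[of r1] mm r
      by (simp add: Phiexp)
    then show ?thesis by simp
  qed
  then show False using \<open>\<Phi> r1 < \<Phi> m\<close> \<open>\<Phi> r2 < \<Phi> m\<close> by simp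
qed

end


context hc begin

lemma M1_sup_lim: "((\<lambda>r. ereal (M1 a r)) \<longlongrightarrow> hardy_norm a R) (at_left R)"
proof (rule order_tendstoI)
  fix y assume "y < hardy_norm a R"
  then obtain r0 where r0: "r0 \<in> {0<..<R}" "y < ereal (M1 a r0)"
    unfolding hardy_norm_def less_SUP_iff by blast
  have "eventually (\<lambda>x. x \<in> {r0<..<R}) (at_left R)"
    using r0 by (intro eventually_at_left_real) auto
  then show "eventually (\<lambda>x. y < ereal (M1 a x)) (at_left R)"
  proof eventually_elim
    case (elim x)
    have "M1 a r0 \<le> M1 a x" using r0 elim by (intro M1_mono) auto
    then show ?case using r0(2) by (simp add: less_le_trans)
  qed
next
  fix y assume y: "y > hardy_norm a R"
  have "eventually (\<lambda>x. x \<in> {0<..<R}) (at_left R)"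
    using Rpos by (intro eventually_at_left_real) auto
  then show "eventually (\<lambda>x. ereal (M1 a x) < y) (at_left R)"
  proof eventually_elim
    case (elim x)
    have "ereal (M1 a x) \<le> hardy_norm a R"
      unfolding hardy_norm_def using elim by (rule SUP_upper)
    then show ?case using y by simp
  qed
qed

lemma kappa_exp:
  assumes x: "0 < x" "x < R" and an: "a n \<noteq> 0"
  shows "kappa a n x = exp (sigma a x - real n * ln x) / norm (a n)"
proof -
  have "exp (sigma a x - real n * ln x) = M1 a x / x ^ n"
    using M1_pos[OF x] x by (simp add: sigma_def exp_diff exp_of_nat_mult)
  then show ?thesis unfolding kappa_def using an by simp
qed

end

theorem theorem4p5:
  fixes a :: "nat \<Rightarrow> complex" and R :: real and n :: nat
  assumes "conv_radius a = ereal R" and "0 < R" and "a n \<noteq> 0"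
  shows "((\<lambda>r. ereal (kappa a n r)) \<longlongrightarrow>
            hardy_norm a R / ereal (norm (a n) * R ^ n)) (at_left R)
       \<and> ((hardy_norm a R / ereal (norm (a n) * R ^ n) < \<infinity>) \<longleftrightarrow> in_hardy_H1 a R)
       \<and> (ereal (real n) > nu a R \<longrightarrow>
           (\<forall>r s. 0 < r \<longrightarrow> r < s \<longrightarrow> s < R \<longrightarrow> kappa a n s < kappa a n r))
       \<and> (nu a R = \<infinity> \<longrightarrow>
           (\<exists>r0. 0 \<le> r0 \<and> r0 < R \<and>
              (\<forall>r s. r0 < r \<longrightarrow> r < s \<longrightarrow> s < R \<longrightarrow> kappa a n r < kappa a n s)))"
proof -
  interpret hc a R n using assms by unfold_locales
  define c where "c = norm (a n)"
  have c: "0 < c" unfolding c_def using assms(3) by simp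
  have div: "x / ereal (c * R ^ n) = x * ereal (1 / (c * R ^ n))" for x
    using c assms(2) by (simp add: divide_ereal_def inverse_eq_divide)
  have P1: "((\<lambda>r. ereal (kappa a n r)) \<longlongrightarrow> hardy_norm a R / ereal (c * R ^ n)) (at_left R)"
  proof -
    have l2: "((\<lambda>r. ereal (1 / (c * r ^ n))) \<longlongrightarrow> ereal (1 / (c * R ^ n))) (at_left R)"
      using c assms(2) by (intro tendsto_ereal tendsto_intros) auto
    have "((\<lambda>r. ereal (M1 a r) * ereal (1 / (c * r ^ n))) \<longlongrightarrow> hardy_norm a R * ereal (1 / (c * R ^ n))) (at_left R)"
      by (rule tendsto_mult_ereal[OF M1_sup_lim l2]) (use c assms(2) in auto)
    moreover have "ereal (M1 a r) * ereal (1 / (c * r ^ n)) = ereal (kappa a n r)" for r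
      unfolding kappa_def c_def by simp
    ultimately show ?thesis unfolding div by simp
  qed
  have P2: "(hardy_norm a R / ereal (c * R ^ n) < \<infinity>) \<longleftrightarrow> in_hardy_H1 a R"
  proof -
    have k: "0 < 1 / (c * R ^ n)" using c assms(2) by simp
    have gen: "x * ereal K < \<infinity> \<longleftrightarrow> x < \<infinity>" if "0 < K" for x K
      using that by (cases x) auto
    show ?thesis unfolding div in_hardy_H1_def using gen[OF k] .
  qed
  define k where "k = (\<lambda>x. sigma a x - real n * ln x)"
  have kd: "(k has_real_derivative (x * deriv (sigma a) x - n) / x) (at x)" if x: "0 < x" "x < R" for x
  proof -
    have "(k has_real_derivative deriv (sigma a) x - real n * (1/x)) (at x)"
      unfolding k_def by (intro DERIV_diff DERIV_cmult sigma_deriv(1)[OF x] DERIV_ln_divide x)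
    then show ?thesis using x by (simp add: field_simps)
  qed
  have kc: "continuous_on {r..s} k" if "0 < r" "s < R" for r s
  proof (intro DERIV_atLeastAtMost_imp_continuous_on)
    fix x assume "r \<le> x" "x \<le> s"
    then show "\<exists>y. (k has_real_derivative y) (at x)" using kd[of x] that by auto
  qed
  have kap: "kappa a n x = exp (k x) / c" if "0 < x" "x < R" for x
    using kappa_exp[OF that assms(3)] unfolding k_def c_def .
  have P3: "ereal (real n) > nu a R \<longrightarrow>
           (\<forall>r s. 0 < r \<longrightarrow> r < s \<longrightarrow> s < R \<longrightarrow> kappa a n s < kappa a n r)"
  proof (intro impI allI)
    fix r s assume nu: "ereal (real n) > nu a R" and rs: "0 < r" "r < s" "s < R"
    have lt: "x * deriv (sigma a) x < n" if "0 < x" "x < R" for x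
    proof -
      have "ereal (x * deriv (sigma a) x) \<le> nu a R"
        unfolding nu_def by (rule SUP_upper) (use that in auto)
      then have "ereal (x * deriv (sigma a) x) < ereal (real n)" using nu by (rule le_less_trans)
      then show ?thesis by simp
    qed
    show "kappa a n s < kappa a n r"
    proof -
      have "k s < k r"
      proof (rule DERIV_neg_imp_decreasing_open[OF rs(2) _ kc[OF rs(1) rs(3)]])
        fix x assume "r < x" "x < s"
        then have x: "0 < x" "x < R" using rs by auto
        show "\<exists>y. (k has_real_derivative y) (at x) \<and> y < 0"
          using kd[OF x] lt[OF x] x by (intro exI[of _ "(x * deriv (sigma a) x - n) / x"]) (auto simp: divide_neg_pos)
      qed
      then show "kappa a n s < kappa a n r" using kap[of r] kap[of s] rs c
        by (simp add: divide_strict_right_mono)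
    qed
  qed
  have P4: "nu a R = \<infinity> \<longrightarrow>
           (\<exists>r0. 0 \<le> r0 \<and> r0 < R \<and>
              (\<forall>r s. r0 < r \<longrightarrow> r < s \<longrightarrow> s < R \<longrightarrow> kappa a n r < kappa a n s))"
  proof
    assume nu: "nu a R = \<infinity>"
    then have "ereal (real n) < nu a R" by simp
    then obtain x1 where x1: "x1 \<in> {0<..<R}" "ereal (real n) < ereal (x1 * deriv (sigma a) x1)"
      unfolding nu_def less_SUP_iff by blast
    have gt: "n < x * deriv (sigma a) x" if "x1 \<le> x" "x < R" for x
    proof (cases "x = x1")
      case True then show ?thesis using x1 by simp
    next
      case False
      then have "x1 * deriv (sigma a) x1 \<le> x * deriv (sigma a) x"
        using that x1 by (intro psi_mono) auto
      then show ?thesis using x1 by simp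
    qed
    show "\<exists>r0. 0 \<le> r0 \<and> r0 < R \<and>
              (\<forall>r s. r0 < r \<longrightarrow> r < s \<longrightarrow> s < R \<longrightarrow> kappa a n r < kappa a n s)"
    proof (intro exI[of _ x1] conjI allI impI)
      show "0 \<le> x1" "x1 < R" using x1 by auto
      fix r s assume rs: "x1 < r" "r < s" "s < R"
      have "k r < k s"
      proof (rule DERIV_pos_imp_increasing_open[OF rs(2) _ kc[of r s]])
        fix x assume "r < x" "x < s"
        then have x: "0 < x" "x < R" and xx: "x1 \<le> x" using rs x1 by auto
        show "\<exists>y. (k has_real_derivative y) (at x) \<and> y > 0"
          using kd[OF x] gt[OF xx x(2)] x by (intro exI[of _ "(x * deriv (sigma a) x - n) / x"]) auto
      qed (use rs x1 in auto)+
      then show "kappa a n r < kappa a n s" using kap[of r] kap[of s] rs x1 c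
        by (simp add: divide_strict_right_mono)
    qed
  qed
  show ?thesis using P1 P2 P3 P4 unfolding c_def by blast
qed


end
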